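(* Consider $S^1\times S^3$ with $S^1\subset\mathbb{C}$ the unit circle and $S^3\subset\mathbb{R}^4$, and the four free involutions $\tau_a(t,v)=(-t,v)$, $\tau_b(t,v)=(-t,r(v))$ with $r$ a hyperplane reflection of $\mathbb{R}^4$, $\tau_c(t,v)=(t,-v)$, and $\tau_d(t,v)=(\overline t,-v)$, whose orbit spaces are respectively $S^1\times S^3$, the nonorientable $S^3$-bundle $S^1\tilde\times S^3$, $S^1\times\mathbb{R}P^3$ and $\mathbb{R}P^4\#\mathbb{R}P^4$. Then $\mathrm{ind}_{\mathbb{Z}_2}(S^1\times S^3,\tau_a)=\mathrm{ind}_{\mathbb{Z}_2}(S^1\times S^3,\tau_b)=1$ and $\mathrm{ind}_{\mathbb{Z}_2}(S^1\times S^3,\tau_c)=\mathrm{ind}_{\mathbb{Z}_2}(S^1\times S^3,\tau_d)=3$.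
   Context: $\mathrm{ind}_{\mathbb{Z}_2}(X,\tau)=\min\{n:\exists$ a map $f:X\to S^n$ with $f\circ\tau=-f\}$. *)

theory Defs
  imports "HOL-Analysis.Analysis"
begin

text \<open>S^n is the library's nsphere n (unit sphere in the first n+1 coordinates).\<close>
definition ind_Z2 :: "'a topology \<Rightarrow> ('a \<Rightarrow> 'a) \<Rightarrow> nat" where
  "ind_Z2 X tau = (LEAST n. \<exists>f. continuous_map X (nsphere n) f \<and>
      (\<forall>x\<in>topspace X. f (tau x) = (\<lambda>i. - f x i)))"

definition S1S3 :: "(complex \<times> (real^4)) topology" where
  "S1S3 = subtopology euclidean (Sigma (sphere (0::complex) 1) (\<lambda>_. sphere (0::real^4) 1))"

definition tau_a :: "complex \<times> (real^4) \<Rightarrow> complex \<times> (real^4)" where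
  "tau_a = (\<lambda>(t,v). (-t, v))"

definition refl :: "real^4 \<Rightarrow> real^4 \<Rightarrow> real^4" where
  "refl u v = v - (2 * (v \<bullet> u)) *\<^sub>R u"

definition tau_b :: "real^4 \<Rightarrow> complex \<times> (real^4) \<Rightarrow> complex \<times> (real^4)" where
  "tau_b u = (\<lambda>(t,v). (-t, refl u v))"

definition tau_c :: "complex \<times> (real^4) \<Rightarrow> complex \<times> (real^4)" where
  "tau_c = (\<lambda>(t,v). (t, -v))"

definition tau_d :: "complex \<times> (real^4) \<Rightarrow> complex \<times> (real^4)" where
  "tau_d = (\<lambda>(t,v). (cnj t, -v))"

end

theory Submission
  imports Defs "HOL-Homology.Homology"
begin

lemma topspace_nsphere_iff:
  "x \<in> topspace (nsphere n) \<longleftrightarrow> (\<Sum>i\<le>n. x i ^ 2) = 1 \<and> (\<forall>i>n. x i = 0)"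
  by (simp add: nsphere)

lemma neg_in_nsphere:
  "x \<in> topspace (nsphere n) \<Longrightarrow> (\<lambda>i. - x i) \<in> topspace (nsphere n)"
  by (simp add: topspace_nsphere_iff)

lemma topspace_nsphere_mono:
  assumes "m \<le> n" "x \<in> topspace (nsphere m)"
  shows "x \<in> topspace (nsphere n)"
proof -
  have "(\<Sum>i\<le>n. x i ^ 2) = (\<Sum>i\<le>m. x i ^ 2)"
    using assms by (intro sum.mono_neutral_right) (auto simp: topspace_nsphere_iff)
  then show ?thesis using assms by (auto simp: topspace_nsphere_iff)
qed

lemma nsphere_sub:
  assumes "m \<le> n"
  shows "nsphere m = subtopology (nsphere n) (topspace (nsphere m))"
proof -
  have sub: "(\<Sum>i\<le>n. x i ^ 2) = 1 \<and> (\<forall>i>n. x i = 0)"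
    if "(\<Sum>i\<le>m. x i ^ 2) = 1 \<and> (\<forall>i>m. x i = 0)" for x :: "nat \<Rightarrow> real"
    using topspace_nsphere_mono[OF assms, of x] that by (simp add: topspace_nsphere_iff)
  have e: "{x. (\<Sum>i\<le>n. x i ^ 2) = 1 \<and> (\<forall>i>n. x i = 0)} \<inter> topspace (nsphere m)
     = {x. (\<Sum>i\<le>m. x i ^ 2) = 1 \<and> (\<forall>i>m. x i = 0)}"
    using sub by (auto simp: topspace_nsphere_iff)
  have "subtopology (nsphere n) (topspace (nsphere m)) = subtopology (powertop_real UNIV)
     ({x. (\<Sum>i\<le>n. x i ^ 2) = 1 \<and> (\<forall>i>n. x i = 0)} \<inter> topspace (nsphere m))"
    unfolding nsphere[of n] subtopology_subtopology ..
  also have "\<dots> = nsphere m" by (subst e) (simp add: nsphere[of m])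
  finally show ?thesis ..
qed

lemma cm_nsphere_up:
  assumes "continuous_map X (nsphere m) f" "m \<le> n"
  shows "continuous_map X (nsphere n) f"
proof -
  define T where "T = topspace (nsphere m)"
  have eq: "nsphere m = subtopology (nsphere n) T"
    unfolding T_def by (rule nsphere_sub[OF assms(2)])
  from assms(1) have "continuous_map X (subtopology (nsphere n) T) f"
    by (simp only: eq)
  then show ?thesis by (simp add: continuous_map_in_subtopology)
qed

lemma cm_nsphere_restrict:
  assumes "continuous_map (nsphere n) (nsphere n) f" "m \<le> n"
    and "\<And>x. x \<in> topspace (nsphere m) \<Longrightarrow> f x \<in> topspace (nsphere m)"
  shows "continuous_map (nsphere m) (nsphere m) f"
proof -
  define T where "T = topspace (nsphere m)"
  have eq: "nsphere m = subtopology (nsphere n) T"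
    unfolding T_def by (rule nsphere_sub[OF assms(2)])
  have "continuous_map (subtopology (nsphere n) T) (subtopology (nsphere n) T) f"
    using assms(1,3) unfolding T_def[symmetric]
    by (simp add: continuous_map_from_subtopology continuous_map_in_subtopology image_subset_iff)
  then show ?thesis by (simp only: eq)
qed

lemma cm_nsphere_intoI:
  assumes "\<And>k. continuous_map X euclideanreal (\<lambda>x. f x k)"
    and "\<And>x. x \<in> topspace X \<Longrightarrow> f x \<in> topspace (nsphere n)"
  shows "continuous_map X (nsphere n) f"
  unfolding nsphere continuous_map_in_subtopology
  using assms by (auto simp: continuous_map_componentwise_UNIV topspace_nsphere_iff)


definition oddmap :: "nat \<Rightarrow> ((nat \<Rightarrow> real) \<Rightarrow> (nat \<Rightarrow> real)) \<Rightarrow> bool" where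
  "oddmap n f \<longleftrightarrow> (\<forall>x\<in>topspace (nsphere n). f (\<lambda>i. - x i) = (\<lambda>i. - f x i))"

lemma step_wrap:
  assumes f: "continuous_map (nsphere (Suc m)) (nsphere (Suc m)) f"
    and od: "oddmap (Suc m) f"
    and fim: "\<And>x. x \<in> topspace (nsphere m) \<Longrightarrow> f x \<in> topspace (nsphere m)"
    and dm: "odd (Brouwer_degree2 m f)"
  shows "odd (Brouwer_degree2 (Suc m) f)"
proof -
  have "even (Brouwer_degree2 (Suc m) f - Brouwer_degree2 (Suc m - Suc 0) f)"
  proof (rule Borsuk_odd_mapping_degree_step[OF f])
    show "(f \<circ> (\<lambda>x i. - x i)) u = ((\<lambda>x i. - x i) \<circ> f) u" if "u \<in> topspace (nsphere (Suc m))" for u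
      using od that by (simp add: oddmap_def)
    show "f \<in> topspace (nsphere (Suc m - Suc 0)) \<rightarrow> topspace (nsphere (Suc m - Suc 0))"
      using fim by auto
  qed
  then have "even (Brouwer_degree2 (Suc m) f - Brouwer_degree2 m f)" by simp
  with dm show ?thesis by presburger
qed

definition e0 :: "nat \<Rightarrow> real" where "e0 = (\<lambda>i. if i = 0 then 1 else 0)"

lemma e0_in [simp]: "e0 \<in> topspace (nsphere n)"
  unfolding e0_def by (rule in_topspace_nsphere)

lemma ts0: "x \<in> topspace (nsphere 0) \<longleftrightarrow> x = e0 \<or> x = (\<lambda>i. - e0 i)"
proof
  assume x: "x \<in> topspace (nsphere 0)"
  then have "x 0 ^ 2 = 1" "\<forall>i>0. x i = 0" by (auto simp: topspace_nsphere_iff)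
  then have "x 0 = 1 \<or> x 0 = -1" by (simp add: power2_eq_1_iff)
  then show "x = e0 \<or> x = (\<lambda>i. - e0 i)"
    using \<open>\<forall>i>0. x i = 0\<close> by (auto simp: e0_def fun_eq_iff)
next
  assume "x = e0 \<or> x = (\<lambda>i. - e0 i)"
  then show "x \<in> topspace (nsphere 0)"
    using e0_in neg_in_nsphere by blast
qed

lemma odd_deg0:
  assumes k: "continuous_map (nsphere 0) (nsphere 0) k" and od: "oddmap 0 k"
  shows "odd (Brouwer_degree2 0 k)"
proof -
  have ke: "k e0 = e0 \<or> k e0 = (\<lambda>i. - e0 i)"
  proof -
    have "k e0 \<in> topspace (nsphere 0)"
      using k e0_in unfolding continuous_map_def by blast
    then show ?thesis by (simp only: ts0)
  qed
  have kn: "k (\<lambda>i. - e0 i) = (\<lambda>i. - k e0 i)"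
    using od by (simp add: oddmap_def)
  show ?thesis
  proof (cases "k e0 = e0")
    case True
    have "Brouwer_degree2 0 k = Brouwer_degree2 0 id"
      by (rule Brouwer_degree2_eq) (use True kn in \<open>auto simp: ts0\<close>)
    then show ?thesis by simp
  next
    case False
    then have F: "k e0 = (\<lambda>i. - e0 i)" using ke by blast
    have "Brouwer_degree2 0 k = Brouwer_degree2 0 (\<lambda>x i. if i = 0 then -x i else x i)"
    proof (rule Brouwer_degree2_eq)
      fix x assume "x \<in> topspace (nsphere 0)"
      then have "x = e0 \<or> x = (\<lambda>i. - e0 i)" by (simp only: ts0)
      then show "k x = (\<lambda>i. if i = 0 then -x i else x i)"
      proof
        assume x: "x = e0" show ?thesis unfolding x F by (simp add: e0_def fun_eq_iff)
      next
        assume x: "x = (\<lambda>i. - e0 i)" show ?thesis unfolding x kn F by (simp add: e0_def fun_eq_iff)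
      qed
    qed
    then show ?thesis by (simp add: Brouwer_degree2_reflection)
  qed
qed


definition rot :: "real \<Rightarrow> (nat \<Rightarrow> real) \<Rightarrow> (nat \<Rightarrow> real)" where
  "rot a x = (\<lambda>i. if i = 0 then cos a * x 0 - sin a * x 1
                 else if i = 1 then sin a * x 0 + cos a * x 1 else x i)"

lemma sum_atMost_1: "(\<Sum>i\<le>(1::nat). f i) = f 0 + (f 1 :: real)"
  by (simp add: numeral_eq_Suc atMost_Suc)

lemma sum_atMost_1': "(\<Sum>i\<le>Suc 0. f i) = f 0 + (f 1 :: real)"
  by (simp add: atMost_Suc)

lemma rot_alg: "(c * p - s * q)^2 + (s * p + c * q)^2 = (s^2 + c^2) * (p^2 + (q::real)^2)"
  by (simp add: power2_eq_square algebra_simps)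

lemma rot_top: "x \<in> topspace (nsphere 1) \<Longrightarrow> rot a x \<in> topspace (nsphere 1)"
proof -
  assume "x \<in> topspace (nsphere 1)"
  then have h: "x 0 ^ 2 + x 1 ^ 2 = 1" "\<forall>i>1. x i = 0"
    by (auto simp: topspace_nsphere_iff sum_atMost_1)
  have "(cos a * x 0 - sin a * x 1)^2 + (sin a * x 0 + cos a * x 1)^2 = (sin a ^2 + cos a ^2) * (x 0 ^2 + x 1^2)"
    by (rule rot_alg)
  also have "\<dots> = 1" using h by simp
  finally have "(cos a * x 0 - sin a * x 1)^2 + (sin a * x 0 + cos a * x 1)^2 = 1" .
  then show ?thesis using h unfolding topspace_nsphere_iff sum_atMost_1 by (simp add: rot_def)
qed

lemma rot0 [simp]: "rot 0 x = x"
  by (auto simp: rot_def fun_eq_iff)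

lemma rot_neg: "rot a (\<lambda>i. - x i) = (\<lambda>i. - rot a x i)"
  by (auto simp: rot_def fun_eq_iff)

lemma cm_fst01: "continuous_map (prod_topology (top_of_set {0..1::real}) X) euclideanreal fst"
  using continuous_map_fst continuous_map_into_fulltopology by blast

lemma cm_snd_nsph: "continuous_map (prod_topology Y (nsphere n)) euclideanreal (\<lambda>z. snd z k)"
  using continuous_map_compose[OF continuous_map_snd continuous_map_nsphere_projection]
  by (simp add: o_def)

lemma cm_cos: "continuous_map X euclideanreal f \<Longrightarrow> continuous_map X euclideanreal (\<lambda>x. cos (f x))"
  using continuous_map_compose[of X euclideanreal f euclideanreal cos]
  by (simp add: o_def continuous_on_cos continuous_on_id)

lemma cm_sin: "continuous_map X euclideanreal f \<Longrightarrow> continuous_map X euclideanreal (\<lambda>x. sin (f x))"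
  using continuous_map_compose[of X euclideanreal f euclideanreal sin]
  by (simp add: o_def continuous_on_sin continuous_on_id)

lemma rot_homotopic: "homotopic_with (\<lambda>x. True) (nsphere 1) (nsphere 1) id (rot a)"
proof -
  have c: "continuous_map (prod_topology (top_of_set {0..1}) (nsphere 1)) (nsphere 1)
        (\<lambda>z. rot (fst z * a) (snd z))"
  proof (rule cm_nsphere_intoI)
    fix k
    have cf: "continuous_map (prod_topology (top_of_set {0..1::real}) (nsphere 1)) euclideanreal (\<lambda>z. fst z * a)"
      by (intro continuous_map_real_mult cm_fst01 continuous_map_const[THEN iffD2]) auto
    show "continuous_map (prod_topology (top_of_set {0..1}) (nsphere 1)) euclideanreal
          (\<lambda>x. rot (fst x * a) (snd x) k)"
      unfolding rot_def
      by (cases "k = 0"; cases "k = 1")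
         (auto intro!: continuous_map_diff continuous_map_add continuous_map_real_mult
               cm_cos cm_sin cf cm_snd_nsph cm_fst01)
  next
    fix z assume "z \<in> topspace (prod_topology (top_of_set {0..1::real}) (nsphere 1))"
    then have "snd z \<in> topspace (nsphere 1)"
      by (simp add: topspace_prod_topology mem_Times_iff)
    then show "rot (fst z * a) (snd z) \<in> topspace (nsphere 1)"
      by (rule rot_top)
  qed
  show ?thesis
    unfolding homotopic_with_def
    by (rule exI[of _ "\<lambda>z. rot (fst z * a) (snd z)"]) (use c in auto)
qed

lemma cm_rot: "continuous_map (nsphere 1) (nsphere 1) (rot a)"
  using homotopic_with_imp_continuous_maps[OF rot_homotopic] by blast

lemma deg_rot: "Brouwer_degree2 1 (rot a) = 1"
  using Brouwer_degree2_homotopic[OF rot_homotopic[of a]] by simp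

lemma odd_deg1:
  assumes k: "continuous_map (nsphere 1) (nsphere 1) k" and od: "oddmap 1 k"
  shows "odd (Brouwer_degree2 1 k)"
proof -
  have ky: "k e0 \<in> topspace (nsphere 1)"
    using k e0_in unfolding continuous_map_def by blast
  then have h: "k e0 0 ^ 2 + k e0 1 ^ 2 = 1" "\<forall>i>1. k e0 i = 0"
    by (auto simp: topspace_nsphere_iff sum_atMost_1)
  then obtain t where t: "k e0 0 = cos t" "k e0 1 = sin t"
    using sincos_total_2pi by metis
  define k' where "k' = rot (-t) \<circ> k"
  have ck': "continuous_map (nsphere 1) (nsphere 1) k'"
    unfolding k'_def using k cm_rot by (rule continuous_map_compose)
  have dk': "Brouwer_degree2 1 k' = Brouwer_degree2 1 k"
    unfolding k'_def using Brouwer_degree2_compose[OF k cm_rot, of "-t"] deg_rot[of "-t"] by simp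
  have k'e: "k' e0 = e0"
  proof -
    have "cos t * cos t + sin t * sin t = 1" by (metis power2_eq_square sin_cos_squared_add3)
    then show ?thesis
      using t h by (auto simp: k'_def rot_def e0_def fun_eq_iff mult.commute)
  qed
  have odk': "oddmap 1 k'"
    using od by (simp add: oddmap_def k'_def rot_neg)
  have k'n: "k' (\<lambda>i. - e0 i) = (\<lambda>i. - e0 i)"
  proof -
    have "k' (\<lambda>i. - e0 i) = (\<lambda>i. - k' e0 i)"
      using odk' e0_in[of 1] unfolding oddmap_def by blast
    then show ?thesis by (simp only: k'e)
  qed
  have fim: "k' x \<in> topspace (nsphere 0)" if "x \<in> topspace (nsphere 0)" for x
  proof -
    have "x = e0 \<or> x = (\<lambda>i. - e0 i)" using that by (simp only: ts0)
    then show ?thesis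
    proof
      assume x: "x = e0" show ?thesis unfolding x k'e ts0 by simp
    next
      assume x: "x = (\<lambda>i. - e0 i)" show ?thesis unfolding x k'n ts0 by simp
    qed
  qed
  have c0: "continuous_map (nsphere 0) (nsphere 0) k'"
    by (rule cm_nsphere_restrict[OF ck']) (use fim in auto)
  have o0: "oddmap 0 k'"
    using odk' topspace_nsphere_mono[of 0 1] by (auto simp: oddmap_def)
  have "odd (Brouwer_degree2 (Suc 0) k')"
    by (rule step_wrap[OF ck'[unfolded One_nat_def] odk'[unfolded One_nat_def] fim odd_deg0[OF c0 o0]])
  then show ?thesis using dk' unfolding One_nat_def by simp
qed

lemma BU3_from_Q2:
  assumes Q2: "\<And>k. continuous_map (nsphere 2) (nsphere 2) k \<Longrightarrow> oddmap 2 k \<Longrightarrow> odd (Brouwer_degree2 2 k)"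
    and g: "continuous_map (nsphere 3) (nsphere 2) g" and od: "oddmap 3 g"
  shows False
proof -
  have g3: "continuous_map (nsphere 3) (nsphere 3) g"
    using cm_nsphere_up[OF g] by simp
  have gim: "g x \<in> topspace (nsphere 2)" if "x \<in> topspace (nsphere 3)" for x
    using g that unfolding continuous_map_def by blast
  have fim: "g x \<in> topspace (nsphere 2)" if "x \<in> topspace (nsphere 2)" for x
    using gim topspace_nsphere_mono[of 2 3] that by simp
  have c2: "continuous_map (nsphere 2) (nsphere 2) g"
    by (rule cm_nsphere_restrict[OF g3]) (use fim in auto)
  have o2: "oddmap 2 g"
    using od topspace_nsphere_mono[of 2 3] by (auto simp: oddmap_def)
  have "odd (Brouwer_degree2 (Suc 2) g)"
    by (rule step_wrap[OF g3[unfolded numeral_3_eq_3 numeral_2_eq_2, folded numeral_2_eq_2]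
          od[unfolded numeral_3_eq_3 numeral_2_eq_2, folded numeral_2_eq_2] fim Q2[OF c2 o2]])
  moreover have "Brouwer_degree2 3 g = 0"
  proof (rule Brouwer_degree2_nonsurjective[OF g3])
    define e3 where "e3 = (\<lambda>i::nat. if i = 3 then 1 else (0::real))"
    have "e3 \<in> topspace (nsphere 3)"
      by (auto simp: topspace_nsphere_iff e3_def if_distrib[of "\<lambda>x. x^2"] cong: if_cong)
    moreover have "e3 \<notin> g ` topspace (nsphere 3)"
    proof
      assume "e3 \<in> g ` topspace (nsphere 3)"
      then obtain x where "x \<in> topspace (nsphere 3)" "e3 = g x" by blast
      then have "e3 \<in> topspace (nsphere 2)" using gim by simp
      then have "e3 3 = 0" unfolding topspace_nsphere_iff by simp
      then show False by (simp add: e3_def)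
    qed
    ultimately show "g ` topspace (nsphere 3) \<noteq> topspace (nsphere 3)" by blast
  qed
  ultimately show False by simp
qed


type_synonym R3 = "real \<times> real \<times> real"

lemma hom_normalize:
  fixes h :: "real \<times> 'a::topological_space \<Rightarrow> 'b::real_normed_vector"
  assumes c: "continuous_on ({0..1} \<times> S) h" and nz: "\<And>p. p \<in> {0..1} \<times> S \<Longrightarrow> h p \<noteq> 0"
  shows "homotopic_with_canon (\<lambda>x. True) S (sphere 0 1)
           (\<lambda>x. h (0,x) /\<^sub>R norm (h (0,x))) (\<lambda>x. h (1,x) /\<^sub>R norm (h (1,x)))"
proof -
  have eq: "prod_topology (top_of_set {0..1::real}) (top_of_set S) = top_of_set ({0..1} \<times> S)"
    by (simp add: prod_topology_subtopology subtopology_subtopology Times_Int_Times)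
  show ?thesis
    unfolding homotopic_with_def
  proof (intro exI conjI)
    show "continuous_map (prod_topology (top_of_set {0..1}) (top_of_set S)) (top_of_set (sphere 0 1))
            (\<lambda>p. h p /\<^sub>R norm (h p))"
      unfolding eq continuous_map_subtopology_eu
      using c nz by (auto intro!: continuous_intros)
  qed auto
qed


lemma norm3: "norm ((a,b,c)::R3) = sqrt (a^2 + b^2 + c^2)"
  by (simp add: norm_Pair)

lemma norm3_sq: "(norm (v::R3))^2 = (fst v)^2 + (fst (snd v))^2 + (snd (snd v))^2"
  by (cases v) (simp add: norm3)

definition Amap :: "R3 \<Rightarrow> real \<Rightarrow> R3 \<Rightarrow> R3" where
  "Amap y t z = z + (t * (inner z y / inner y y)) *\<^sub>R (norm y *\<^sub>R (0,0,1) - y)"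

lemma Amap0 [simp]: "Amap y 0 z = z"
  by (simp add: Amap_def)

lemma Amap_lin: "Amap y t (z1 - s *\<^sub>R z2) = Amap y t z1 - s *\<^sub>R Amap y t z2"
  by (simp add: Amap_def inner_diff_left algebra_simps add_divide_distrib diff_divide_distrib)

lemma Amap_neg: "Amap y t (- z) = - Amap y t z"
  by (simp add: Amap_def algebra_simps zero_prod_def)

lemma Amap_yy: "y \<noteq> 0 \<Longrightarrow> Amap y 1 y = norm y *\<^sub>R (0,0,1)"
  by (simp add: Amap_def)

lemma Amap_inj:
  assumes y2: "snd (snd y) > 0" and t: "0 \<le> t" "t \<le> 1" and A: "Amap y t z = 0"
  shows "z = 0"
proof -
  obtain y0 y1 y2' where yeq: "y = (y0, y1, y2')" by (cases y) auto
  have yn: "y \<noteq> 0" using y2 by auto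
  define b where "b = inner y y"
  have b: "b > 0" using yn by (simp add: b_def)
  have bn: "b = norm y ^ 2" by (simp add: b_def power2_norm_eq_inner)
  define a where "a = inner z y"
  define w where "w = norm y *\<^sub>R ((0,0,1)::R3) - y"
  define d where "d = inner w y"
  have d: "d = norm y * snd (snd y) - b"
    by (simp add: d_def w_def b_def inner_diff_left yeq algebra_simps)
  have z: "z = - ((t * (a / b)) *\<^sub>R w)"
    using A unfolding Amap_def a_def b_def w_def by (simp add: eq_neg_iff_add_eq_0)
  have "a = inner z y" by (simp add: a_def)
  also have "\<dots> = - (t * (a / b)) * d" by (simp add: z d_def)
  finally have "a * b = - t * a * d" using b by (simp add: field_simps)
  then have "a * (b + t * d) = 0" by (simp add: algebra_simps)
  moreover have "b + t * d > 0"
  proof -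
    have ny: "norm y > 0" using yn by simp
    have "b + t * d = norm y * ((1 - t) * norm y + t * snd (snd y))"
      by (simp add: d bn power2_eq_square algebra_simps)
    moreover have "(1 - t) * norm y + t * snd (snd y) > 0"
    proof (cases "t = 0")
      case True then show ?thesis using ny by simp
    next
      case False
      then have "t * snd (snd y) > 0" using t y2 by simp
      moreover have "(1 - t) * norm y \<ge> 0" using t ny by simp
      ultimately show ?thesis by linarith
    qed
    ultimately show ?thesis using ny by simp
  qed
  ultimately have "a = 0" by simp
  then show ?thesis using z by simp
qed


lemma aux_half:
  fixes k1 :: "'a::real_vector"
  shows "k2 = - k1 \<Longrightarrow> k1 - (1/2) *\<^sub>R (p1 - p2) = (1/2) *\<^sub>R ((k1 - p1) - (k2 - p2))"
proof -
  assume "k2 = - k1"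
  have "(1/2) *\<^sub>R ((k1 - p1) - (k2 - p2)) = (1/2) *\<^sub>R (k1 + k1) - (1/2) *\<^sub>R (p1 - p2)"
    using \<open>k2 = - k1\<close> by (simp add: algebra_simps)
  also have "(1/2) *\<^sub>R (k1 + k1) = k1"
    by (simp flip: scaleR_2)
  finally show ?thesis by simp
qed

lemma good_approx:
  fixes K :: "R3 \<Rightarrow> R3"
  assumes Kc: "continuous_on (sphere 0 1) K" and Ks: "\<And>x. x \<in> sphere 0 1 \<Longrightarrow> K x \<in> sphere 0 1"
    and Ko: "\<And>x. x \<in> sphere 0 1 \<Longrightarrow> K (-x) = - K x"
  obtains G where "continuous_on (sphere 0 1) G" "\<And>x. x \<in> sphere 0 1 \<Longrightarrow> G x \<in> sphere 0 1"
    "\<And>x. x \<in> sphere 0 1 \<Longrightarrow> G (-x) = - G x"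
    "homotopic_with_canon (\<lambda>x. True) (sphere 0 1) (sphere 0 1) K G"
    "\<And>x. x \<in> sphere 0 1 \<Longrightarrow> snd (snd x) = 0 \<Longrightarrow> snd (snd (G x)) = 0"
proof -
  let ?S = "sphere (0::R3) 1"
  obtain P where P: "polynomial_function P" and Pa: "\<forall>x\<in>?S. norm (K x - P x) < 1/2"
    using Stone_Weierstrass_polynomial_function[OF compact_sphere Kc, of "1/2"] by auto
  define Q where "Q x = (1/2) *\<^sub>R (P x - P (-x))" for x
  have Pm: "polynomial_function (\<lambda>x. P (-x))"
    using polynomial_function_compose[OF polynomial_function_minus[OF polynomial_function_id] P]
    by (simp add: o_def)
  have Qp: "polynomial_function Q"
    unfolding Q_def using P Pm by (intro polynomial_function_cmul polynomial_function_diff)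
  have Qc: "continuous_on A Q" for A
    using Qp continuous_on_polymonial_function by blast
  have Qo: "Q (-x) = - Q x" for x
    unfolding Q_def by (simp add: algebra_simps)
  have Kn: "norm (K x) = 1" if "x \<in> ?S" for x
    using Ks[OF that] by simp
  have Qa: "norm (K x - Q x) < 1/2" if "x \<in> ?S" for x
  proof -
    have mx: "-x \<in> ?S" using that by simp
    have "K x - Q x = (1/2) *\<^sub>R ((K x - P x) - (K (-x) - P (-x)))"
      unfolding Q_def by (rule aux_half[OF Ko[OF that]])
    then have "norm (K x - Q x) \<le> (1/2) * (norm (K x - P x) + norm (K (-x) - P (-x)))"
      by (simp add: norm_triangle_ineq4)
    also have "\<dots> < (1/2) * (1/2 + 1/2)"
      using Pa that mx by (intro mult_strict_left_mono add_strict_mono) auto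
    finally show ?thesis by simp
  qed
  have Qnz: "Q x \<noteq> 0" if "x \<in> ?S" for x
    using Qa[OF that] Kn[OF that] by auto
  define N where "N = range (\<lambda>p::real\<times>real. fst p *\<^sub>R Q (cos (snd p), sin (snd p), 0))"
  have negN: "negligible N"
    unfolding N_def
  proof (rule negligible_differentiable_image_lowdim)
    show "DIM(real \<times> real) < DIM(R3)" by simp
    have "polynomial_function (\<lambda>p::real\<times>real. Q (cos (snd p), sin (snd p), 0)) \<or> True" by simp
    show "(\<lambda>p::real\<times>real. fst p *\<^sub>R Q (cos (snd p), sin (snd p), 0)) differentiable_on UNIV"
      unfolding differentiable_on_def
    proof
      fix p :: "real \<times> real"
      have d1: "(\<lambda>p::real\<times>real. (cos (snd p), sin (snd p), 0::real)) differentiable at p"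
        unfolding differentiable_def
        by (rule exI, (rule derivative_eq_intros refl)+)
      have d2: "Q differentiable at (cos (snd p), sin (snd p), 0)"
        using Qp differentiable_at_polynomial_function by blast
      have d3: "(\<lambda>p::real\<times>real. Q (cos (snd p), sin (snd p), 0)) differentiable at p"
        using differentiable_chain_at[OF d1 d2] by (simp add: o_def)
      have d4: "fst differentiable at p"
        by (rule bounded_linear_imp_differentiable[OF bounded_linear_fst])
      show "(\<lambda>p::real\<times>real. fst p *\<^sub>R Q (cos (snd p), sin (snd p), 0)) differentiable at p within UNIV"
        using differentiable_scaleR[OF d4 d3] by simp
    qed
  qed
  define e2 :: R3 where "e2 = (0,0,1)"
  have "\<not> negligible (ball e2 (1/2))"
    by (rule open_not_negligible) auto
  moreover have "negligible (insert 0 N)" using negN by simp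
  ultimately have "\<not> ball e2 (1/2) \<subseteq> insert 0 N"
    using negligible_subset by blast
  then obtain y where yb: "y \<in> ball e2 (1/2)" and yN: "y \<notin> N" and y0: "y \<noteq> 0"
    by blast
  have y2: "snd (snd y) > 0"
  proof -
    obtain a b c where yeq: "y = (a,b,c)" by (cases y) auto
    have "dist e2 y = sqrt (a^2 + b^2 + (1 - c)^2)"
      by (simp add: dist_norm e2_def yeq norm3 power2_commute)
    moreover have "sqrt ((1 - c)^2) \<le> sqrt (a^2 + b^2 + (1 - c)^2)"
      by (rule real_sqrt_le_mono) simp
    ultimately have "\<bar>1 - c\<bar> < 1/2" using yb by simp
    then show ?thesis unfolding yeq by (simp add: abs_if split: if_splits)
  qed
  define A where "A = Amap y"
  have Anz: "A t z \<noteq> 0" if "0 \<le> t" "t \<le> 1" "z \<noteq> 0" for t z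
    using Amap_inj[OF y2 that(1,2)] that(3) unfolding A_def by blast
  have Ac: "continuous_on X (\<lambda>p. A (f p) (g p))" if "continuous_on X f" "continuous_on X g" for X f g
    unfolding A_def Amap_def using that y0 by (intro continuous_intros) auto
  define P1 where "P1 x = A 1 (Q x) /\<^sub>R norm (A 1 (Q x))" for x
  have AQnz: "A t (Q x) \<noteq> 0" if "x \<in> ?S" "0 \<le> t" "t \<le> 1" for x t
    using Anz[OF that(2,3) Qnz[OF that(1)]] .
  have P1c: "continuous_on ?S P1"
    unfolding P1_def using AQnz
    by (intro continuous_intros Ac Qc) auto
  have P1n: "norm (P1 x) = 1" if "x \<in> ?S" for x
    using AQnz[OF that, of 1] by (simp add: P1_def)
  have P1o: "P1 (-x) = - P1 x" for x
    by (simp add: P1_def Qo A_def Amap_neg)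
  have key: "fst (P1 x) \<noteq> 0 \<or> fst (snd (P1 x)) \<noteq> 0" if x: "x \<in> ?S" "snd (snd x) = 0" for x
  proof (rule ccontr)
    assume "\<not> ?thesis"
    then have h0: "fst (A 1 (Q x)) = 0" "fst (snd (A 1 (Q x))) = 0"
      using AQnz[OF x(1), of 1] by (auto simp: P1_def)
    define s where "s = snd (snd (A 1 (Q x)))"
    have As: "A 1 (Q x) = s *\<^sub>R (0,0,1)"
      using h0 by (cases "A 1 (Q x)") (auto simp: s_def)
    have A0: "A 1 (Q x - (s / norm y) *\<^sub>R y) = 0"
      using As Amap_yy[OF y0] y0 by (simp add: A_def Amap_lin)
    have "Q x - (s / norm y) *\<^sub>R y = 0"
    proof (rule ccontr)
      assume "Q x - (s / norm y) *\<^sub>R y \<noteq> 0"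
      then have "A 1 (Q x - (s / norm y) *\<^sub>R y) \<noteq> 0" by (intro Anz) auto
      then show False using A0 by contradiction
    qed
    then have Qxy: "Q x = (s / norm y) *\<^sub>R y" by simp
    have s0: "s \<noteq> 0" using Qxy Qnz[OF x(1)] by auto
    have yQ: "y = (norm y / s) *\<^sub>R Q x"
      using Qxy s0 y0 by simp
    obtain x0 x1 where xe: "x = (x0, x1, 0)" using x(2) by (cases x) auto
    have "x0^2 + x1^2 = 1" using x(1) by (simp add: xe norm3)
    then obtain th where th: "x0 = cos th" "x1 = sin th"
      using sincos_total_2pi by metis
    have "y \<in> N"
      unfolding N_def using yQ xe th by (intro range_eqI[of _ _ "(norm y / s, th)"]) simp
    then show False using yN by contradiction
  qed
  let ?E = "?S \<inter> {x. snd (snd x) = 0}"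
  have cE: "compact ?E"
    by (intro compact_Int_closed compact_sphere closed_Collect_eq continuous_intros)
  have nE: "?E \<noteq> {}"
  proof -
    have "((1,0,0)::R3) \<in> ?E" by (simp add: norm3)
    then show ?thesis by blast
  qed
  have cE1: "continuous_on ?E P1" by (rule continuous_on_subset[OF P1c]) auto
  have "continuous_on ?E (\<lambda>x. \<bar>snd (snd (P1 x))\<bar>)" by (intro continuous_intros cE1)
  from continuous_attains_sup[OF cE nE this]
  obtain xm where xm: "xm \<in> ?E" and xmax: "\<And>x. x \<in> ?E \<Longrightarrow> \<bar>snd (snd (P1 x))\<bar> \<le> \<bar>snd (snd (P1 xm))\<bar>"
    by blast
  define c where "c = \<bar>snd (snd (P1 xm))\<bar>"
  have c0: "0 \<le> c" by (simp add: c_def)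
  have c1: "c < 1"
  proof -
    have "norm (P1 xm)^2 = 1" using P1n xm by simp
    then have "(fst (P1 xm))^2 + (fst (snd (P1 xm)))^2 + (snd (snd (P1 xm)))^2 = 1"
      by (simp add: norm3_sq)
    moreover have "(fst (P1 xm))^2 + (fst (snd (P1 xm)))^2 > 0"
      using key[of xm] xm by (auto simp: add_pos_nonneg add_nonneg_pos)
    ultimately have "(snd (snd (P1 xm)))^2 < 1" by linarith
    then show ?thesis by (simp add: c_def abs_square_less_1)
  qed
  have cE': "\<bar>snd (snd (P1 x))\<bar> \<le> c" if "x \<in> ?E" for x
    using xmax[OF that] by (simp add: c_def)
  define hh where "hh t = (max 0 (t - c) + min 0 (t + c)) / (1 - c)" for t
  have hho: "hh (-t) = - hh t" for t
    by (simp add: hh_def max_def min_def divide_simps) 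
  have hh1: "hh 1 = 1" "hh (-1) = -1"
    using c0 c1 by (simp_all add: hh_def max_def min_def divide_simps)
  have hh0: "hh t = 0" if "\<bar>t\<bar> \<le> c" for t
    using that by (simp add: hh_def max_def min_def abs_le_iff)
  have hhc: "continuous_on X (\<lambda>p. hh (f p))" if "continuous_on X f" for X f
    unfolding hh_def using that c1 by (intro continuous_intros) auto
  define H3 where "H3 p = (fst (P1 (snd p)), fst (snd (P1 (snd p))),
      (1 - fst p) * snd (snd (P1 (snd p))) + fst p * hh (snd (snd (P1 (snd p)))))" for p :: "real \<times> R3"
  have H3nz: "H3 p \<noteq> 0" if "p \<in> {0..1} \<times> ?S" for p
  proof
    assume H0: "H3 p = 0"
    obtain t x where p0: "p = (t, x)" by (cases p)
    have p: "p = (t, x)" "0 \<le> t" "t \<le> 1" "x \<in> ?S" using that p0 by auto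
    have f0: "fst (P1 x) = 0" "fst (snd (P1 x)) = 0" using H0 by (auto simp: H3_def p zero_prod_def)
    have "norm (P1 x)^2 = 1" using P1n p by simp
    then have "(snd (snd (P1 x)))^2 = 1" using f0 by (simp add: norm3_sq)
    then have "snd (snd (P1 x)) = 1 \<or> snd (snd (P1 x)) = -1" by (simp add: power2_eq_1_iff)
    then have "snd (snd (H3 p)) \<noteq> 0"
      using hh1 by (auto simp: H3_def p algebra_simps)
    then show False using H0 by (simp add: zero_prod_def)
  qed
  have H3c: "continuous_on ({0..1} \<times> ?S) H3"
  proof -
    have cP: "continuous_on ({0..1} \<times> ?S) (\<lambda>p::real\<times>R3. P1 (snd p))"
      by (rule continuous_on_compose2[OF P1c continuous_on_snd]) auto
    show ?thesis unfolding H3_def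
      by (intro continuous_intros hhc cP continuous_on_fst continuous_on_snd)
  qed
  define G where "G x = H3 (1,x) /\<^sub>R norm (H3 (1,x))" for x
  have hom3: "homotopic_with_canon (\<lambda>x. True) ?S (sphere 0 1)
           (\<lambda>x. H3 (0,x) /\<^sub>R norm (H3 (0,x))) G"
    unfolding G_def by (rule hom_normalize[OF H3c H3nz])
  have H30: "H3 (0,x) /\<^sub>R norm (H3 (0,x)) = P1 x" if "x \<in> ?S" for x
  proof -
    have "H3 (0,x) = P1 x" by (cases "P1 x") (simp add: H3_def)
    then show ?thesis using P1n[OF that] by simp
  qed
  define h2 where "h2 p = A (fst p) (Q (snd p))" for p :: "real \<times> R3"
  have h2c: "continuous_on ({0..1} \<times> ?S) h2"
    unfolding h2_def
    by (intro Ac continuous_on_fst continuous_on_compose2[OF Qc continuous_on_snd]) auto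
  have hom2: "homotopic_with_canon (\<lambda>x. True) ?S (sphere 0 1)
           (\<lambda>x. h2 (0,x) /\<^sub>R norm (h2 (0,x))) (\<lambda>x. h2 (1,x) /\<^sub>R norm (h2 (1,x)))"
  proof (rule hom_normalize[OF h2c])
    fix p :: "real \<times> R3" assume pp: "p \<in> {0..1} \<times> ?S"
    obtain t x where p0: "p = (t, x)" by (cases p)
    show "h2 p \<noteq> 0" using pp AQnz[of x t] unfolding p0 h2_def by simp
  qed
  define h1 where "h1 p = (1 - fst p) *\<^sub>R K (snd p) + fst p *\<^sub>R Q (snd p)" for p :: "real \<times> R3"
  have h1c: "continuous_on ({0..1} \<times> ?S) h1"
    unfolding h1_def
    by (intro continuous_intros continuous_on_compose2[OF Qc continuous_on_snd]
          continuous_on_compose2[OF Kc continuous_on_snd]) auto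
  have h1nz: "h1 p \<noteq> 0" if "p \<in> {0..1} \<times> ?S" for p
  proof
    assume H0: "h1 p = 0"
    obtain t x where p0: "p = (t, x)" by (cases p)
    have p: "p = (t, x)" "0 \<le> t" "t \<le> 1" "x \<in> ?S" using that p0 by auto
    have "h1 p = K x - t *\<^sub>R (K x - Q x)" by (simp add: h1_def p algebra_simps)
    then have eK: "K x = t *\<^sub>R (K x - Q x)" using H0 by simp
    have "norm (K x) = norm (t *\<^sub>R (K x - Q x))" using eK by (rule arg_cong)
    also have "\<dots> = t * norm (K x - Q x)" using p by simp
    also have "\<dots> \<le> norm (K x - Q x)" using p by (simp add: mult_left_le_one_le)
    also have "\<dots> < 1/2" using Qa p by simp
    finally show False using Kn p by simp
  qed
  have hom1: "homotopic_with_canon (\<lambda>x. True) ?S (sphere 0 1)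
           (\<lambda>x. h1 (0,x) /\<^sub>R norm (h1 (0,x))) (\<lambda>x. h1 (1,x) /\<^sub>R norm (h1 (1,x)))"
    by (rule hom_normalize[OF h1c h1nz])
  have hK: "homotopic_with_canon (\<lambda>x. True) ?S (sphere 0 1) K (\<lambda>x. Q x /\<^sub>R norm (Q x))"
    by (rule homotopic_with_eq[OF hom1]) (auto simp: h1_def Kn)
  have hQ: "homotopic_with_canon (\<lambda>x. True) ?S (sphere 0 1) (\<lambda>x. Q x /\<^sub>R norm (Q x)) P1"
    by (rule homotopic_with_eq[OF hom2]) (auto simp: h2_def P1_def A_def)
  have hP: "homotopic_with_canon (\<lambda>x. True) ?S (sphere 0 1) P1 G"
    by (rule homotopic_with_eq[OF hom3]) (auto simp: H30)
  have hom: "homotopic_with_canon (\<lambda>x. True) ?S ?S K G"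
    using homotopic_with_trans[OF homotopic_with_trans[OF hK hQ] hP] by simp
  have Gc: "continuous_on ?S G" and Gs: "\<And>x. x \<in> ?S \<Longrightarrow> G x \<in> ?S"
    using homotopic_with_imp_continuous_maps[OF hom] by (auto simp: continuous_map_subtopology_eu)
  have Go: "G (-x) = - G x" if "x \<in> ?S" for x
  proof -
    have "H3 (1, -x) = - H3 (1, x)"
      by (simp add: H3_def P1o hho zero_prod_def)
    then show ?thesis by (simp add: G_def)
  qed
  have Ge: "snd (snd (G x)) = 0" if "x \<in> ?S" "snd (snd x) = 0" for x
  proof -
    have "hh (snd (snd (P1 x))) = 0" using cE' that by (intro hh0) auto
    then show ?thesis by (simp add: G_def H3_def)
  qed
  show ?thesis using that[OF Gc Gs Go hom Ge] .
qed


definition E3 :: "(nat \<Rightarrow> real) \<Rightarrow> R3" where "E3 x = (x 0, x 1, x 2)"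
definition D3 :: "R3 \<Rightarrow> (nat \<Rightarrow> real)" where
  "D3 z = (\<lambda>i. if i = 0 then fst z else if i = 1 then fst (snd z) else if i = 2 then snd (snd z) else 0)"

lemma sum_atMost_2: "(\<Sum>i\<le>(2::nat). f i) = f 0 + f 1 + (f 2 :: real)"
  by (simp add: numeral_eq_Suc atMost_Suc)

lemma ts2: "x \<in> topspace (nsphere 2) \<longleftrightarrow> x 0 ^ 2 + x 1 ^ 2 + x 2 ^ 2 = 1 \<and> (\<forall>i>2. x i = 0)"
  unfolding topspace_nsphere_iff sum_atMost_2 ..

lemma E3_in: "x \<in> topspace (nsphere 2) \<Longrightarrow> E3 x \<in> sphere 0 1"
  by (simp add: ts2 E3_def norm3)

lemma D3E3: "x \<in> topspace (nsphere 2) \<Longrightarrow> D3 (E3 x) = x"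
  by (auto simp: ts2 D3_def E3_def fun_eq_iff)

lemma D3_in: "z \<in> sphere 0 1 \<Longrightarrow> D3 z \<in> topspace (nsphere 2)"
  by (cases z) (simp add: ts2 D3_def norm3)

lemma E3D3 [simp]: "E3 (D3 z) = z"
  by (simp add: E3_def D3_def)

lemma E3_neg: "E3 (\<lambda>i. - x i) = - E3 x"
  by (simp add: E3_def)

lemma D3_neg: "D3 (- z) = (\<lambda>i. - D3 z i)"
  by (auto simp: D3_def fun_eq_iff)

lemma cmE3: "continuous_map (nsphere 2) (top_of_set (sphere 0 1)) E3"
proof -
  have "continuous_map (nsphere 2) (prod_topology euclideanreal (prod_topology euclideanreal euclideanreal))
          (\<lambda>x. (x 0, x 1, x 2))"
    by (intro continuous_map_pairedI continuous_map_nsphere_projection)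
  then have "continuous_map (nsphere 2) euclidean E3"
    unfolding E3_def[abs_def] by simp
  then show ?thesis
    using E3_in by (auto simp: continuous_map_in_subtopology)
qed

lemma cmD3: "continuous_map (top_of_set (sphere 0 1)) (nsphere 2) D3"
proof (rule cm_nsphere_intoI)
  fix k
  show "continuous_map (top_of_set (sphere 0 1)) euclideanreal (\<lambda>x. D3 x k)"
    unfolding D3_def continuous_map_iff_continuous
    by (cases "k = 0"; cases "k = 1"; cases "k = 2") (simp_all add: continuous_intros)
next
  fix x assume "x \<in> topspace (top_of_set (sphere (0::R3) 1))"
  then show "D3 x \<in> topspace (nsphere 2)" by (simp add: D3_in)
qed

lemma equator_ts: "x \<in> topspace (nsphere (Suc n)) \<Longrightarrow> x (Suc n) = 0 \<Longrightarrow> x \<in> topspace (nsphere n)"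
proof -
  assume "x \<in> topspace (nsphere (Suc n))" "x (Suc n) = 0"
  then have "x \<in> topspace (subtopology (nsphere (Suc n)) {x. x (Suc n) = 0})" by simp
  then show ?thesis by (simp only: subtopology_nsphere_equator)
qed

lemma odd_deg2:
  assumes k: "continuous_map (nsphere 2) (nsphere 2) k" and od: "oddmap 2 k"
  shows "odd (Brouwer_degree2 2 k)"
proof -
  let ?S = "sphere (0::R3) 1"
  define K where "K = E3 \<circ> (k \<circ> D3)"
  have cK: "continuous_map (top_of_set ?S) (top_of_set ?S) K"
    unfolding K_def by (intro continuous_map_compose[OF _ cmE3] continuous_map_compose[OF cmD3 k])
  then have Kc: "continuous_on ?S K" and Ks: "\<And>x. x \<in> ?S \<Longrightarrow> K x \<in> ?S"
    by (auto simp: continuous_map_subtopology_eu Pi_iff)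
  have Ko: "K (-x) = - K x" if "x \<in> ?S" for x
  proof -
    have "k (\<lambda>i. - D3 x i) = (\<lambda>i. - k (D3 x) i)"
      using od D3_in[OF that] by (simp add: oddmap_def)
    then show ?thesis by (simp add: K_def D3_neg E3_neg)
  qed
  obtain G where Gc: "continuous_on ?S G" and Gs: "\<And>x. x \<in> ?S \<Longrightarrow> G x \<in> ?S"
    and Go: "\<And>x. x \<in> ?S \<Longrightarrow> G (-x) = - G x"
    and hKG: "homotopic_with_canon (\<lambda>x. True) ?S ?S K G"
    and Ge: "\<And>x. x \<in> ?S \<Longrightarrow> snd (snd x) = 0 \<Longrightarrow> snd (snd (G x)) = 0"
    using good_approx[OF Kc Ks Ko] by blast
  have cG: "continuous_map (top_of_set ?S) (top_of_set ?S) G"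
    using Gc Gs by (auto simp: continuous_map_subtopology_eu)
  define k' where "k' = D3 \<circ> (G \<circ> E3)"
  have ck': "continuous_map (nsphere 2) (nsphere 2) k'"
    unfolding k'_def by (intro continuous_map_compose[OF _ cmD3] continuous_map_compose[OF cmE3 cG])
  have h1: "homotopic_with (\<lambda>x. True) (nsphere 2) (top_of_set ?S) (K \<circ> E3) (G \<circ> E3)"
    by (rule homotopic_with_compose_continuous_map_right[OF hKG cmE3]) auto
  have h2: "homotopic_with (\<lambda>x. True) (nsphere 2) (nsphere 2) (D3 \<circ> (K \<circ> E3)) k'"
    unfolding k'_def by (rule homotopic_with_compose_continuous_map_left[OF h1 cmD3]) auto
  have "Brouwer_degree2 2 k = Brouwer_degree2 2 (D3 \<circ> (K \<circ> E3))"
  proof (rule Brouwer_degree2_eq)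
    fix x assume x: "x \<in> topspace (nsphere 2)"
    have kx: "k x \<in> topspace (nsphere 2)" using k x unfolding continuous_map_def by blast
    show "k x = (D3 \<circ> (K \<circ> E3)) x"
      using x kx by (simp add: K_def D3E3)
  qed
  also have "\<dots> = Brouwer_degree2 2 k'"
    by (rule Brouwer_degree2_homotopic[OF h2])
  finally have dk: "Brouwer_degree2 2 k = Brouwer_degree2 2 k'" .
  have ok': "oddmap 2 k'"
    unfolding oddmap_def
  proof
    fix x assume x: "x \<in> topspace (nsphere 2)"
    show "k' (\<lambda>i. - x i) = (\<lambda>i. - k' x i)"
      using Go[OF E3_in[OF x]] by (simp add: k'_def E3_neg D3_neg)
  qed
  have fim: "k' x \<in> topspace (nsphere 1)" if x: "x \<in> topspace (nsphere 1)" for x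
  proof -
    have x2: "x \<in> topspace (nsphere 2)" using topspace_nsphere_mono[of 1 2] x by simp
    have "x 2 = 0" using x by (simp add: topspace_nsphere_iff)
    then have "snd (snd (G (E3 x))) = 0" using Ge[OF E3_in[OF x2]] by (simp add: E3_def)
    then have "k' x 2 = 0" by (simp add: k'_def D3_def)
    moreover have "k' x \<in> topspace (nsphere 2)" using ck' x2 unfolding continuous_map_def by blast
    ultimately show ?thesis using equator_ts[of "k' x" 1] by (simp add: numeral_2_eq_2)
  qed
  have c1: "continuous_map (nsphere 1) (nsphere 1) k'"
    by (rule cm_nsphere_restrict[OF ck']) (use fim in auto)
  have o1: "oddmap 1 k'"
    using ok' topspace_nsphere_mono[of 1 2] by (auto simp: oddmap_def)
  have e: "Suc 1 = (2::nat)" by simp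
  have "odd (Brouwer_degree2 2 k')"
    using step_wrap[of 1 k', unfolded e] ck' ok' fim odd_deg1[OF c1 o1] by blast
  then show ?thesis using dk by simp
qed

lemma BU3:
  assumes g: "continuous_map (nsphere 3) (nsphere 2) g" and od: "oddmap 3 g"
  shows False
  using BU3_from_Q2[OF odd_deg2 g od] .


abbreviation "S1 \<equiv> sphere (0::complex) 1"
abbreviation "S3 \<equiv> sphere (0::real^4) 1"

lemma S1S3_prod: "S1S3 = prod_topology (top_of_set S1) (top_of_set S3)"
  by (simp add: S1S3_def prod_topology_subtopology subtopology_subtopology Times_Int_Times)

lemma topspace_S1S3: "topspace S1S3 = S1 \<times> S3"
  by (simp add: S1S3_def)

lemma norm4: "norm (v::real^4) = sqrt ((v$1)^2 + (v$2)^2 + (v$3)^2 + (v$4)^2)"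
  by (simp add: norm_vec_def L2_set_def sum_4)

definition V4 :: "(nat \<Rightarrow> real) \<Rightarrow> real^4" where
  "V4 x = x 0 *\<^sub>R axis 1 1 + x 1 *\<^sub>R axis 2 1 + x 2 *\<^sub>R axis 3 1 + x 3 *\<^sub>R axis 4 1"

lemma V4_nth: "V4 x $ 1 = x 0" "V4 x $ 2 = x 1" "V4 x $ 3 = x 2" "V4 x $ 4 = x 3"
  by (simp_all add: V4_def axis_def)

lemma sum_atMost_3: "(\<Sum>i\<le>(3::nat). f i) = f 0 + f 1 + f 2 + (f 3 :: real)"
  by (simp add: numeral_eq_Suc atMost_Suc)

lemma V4_in: "x \<in> topspace (nsphere 3) \<Longrightarrow> V4 x \<in> S3"
  by (simp add: topspace_nsphere_iff sum_atMost_3 norm4 V4_nth)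

lemma V4_neg: "V4 (\<lambda>i. - x i) = - V4 x"
  by (simp add: V4_def algebra_simps)

lemma cm_scaleR_const:
  fixes c :: "'b::real_normed_vector"
  shows "continuous_map X euclideanreal f \<Longrightarrow> continuous_map X euclidean (\<lambda>x. f x *\<^sub>R c)"
  by (simp add: continuous_map_atin tendsto_scaleR)

lemma cmV4: "continuous_map (nsphere 3) (top_of_set S3) V4"
proof -
  have "continuous_map (nsphere 3) euclidean V4"
    unfolding V4_def[abs_def]
    by (intro continuous_map_add cm_scaleR_const continuous_map_nsphere_projection)
  then show ?thesis using V4_in by (auto simp: continuous_map_in_subtopology)
qed

definition U4 :: "real^4 \<Rightarrow> (nat \<Rightarrow> real)" where
  "U4 v = (\<lambda>i. if i = 0 then v$1 else if i = 1 then v$2 else if i = 2 then v$3 else if i = 3 then v$4 else 0)"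

lemma U4_in: "v \<in> S3 \<Longrightarrow> U4 v \<in> topspace (nsphere 3)"
  by (simp add: topspace_nsphere_iff sum_atMost_3 norm4 U4_def)

lemma U4_neg: "U4 (- v) = (\<lambda>i. - U4 v i)"
  by (auto simp: U4_def fun_eq_iff)

definition C2 :: "complex \<Rightarrow> (nat \<Rightarrow> real)" where
  "C2 t = (\<lambda>i. if i = 0 then Re t else if i = 1 then Im t else 0)"

lemma C2_in: "t \<in> S1 \<Longrightarrow> C2 t \<in> topspace (nsphere 1)"
proof -
  assume "t \<in> S1"
  then have "Re t ^ 2 + Im t ^ 2 = 1" using cmod_power2[of t] by simp
  then show ?thesis by (simp add: topspace_nsphere_iff sum_atMost_1 C2_def)
qed

lemma C2_neg: "C2 (- t) = (\<lambda>i. - C2 t i)"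
  by (auto simp: C2_def fun_eq_iff)


lemma ind_eqI:
  assumes ex: "\<exists>f. continuous_map X (nsphere n) f \<and> (\<forall>x\<in>topspace X. f (tau x) = (\<lambda>i. - f x i))"
    and no: "\<And>m f. m < n \<Longrightarrow> continuous_map X (nsphere m) f \<Longrightarrow> (\<forall>x\<in>topspace X. f (tau x) = (\<lambda>i. - f x i)) \<Longrightarrow> False"
  shows "ind_Z2 X tau = n"
  unfolding ind_Z2_def
proof (rule Least_equality)
  show "\<exists>f. continuous_map X (nsphere n) f \<and> (\<forall>x\<in>topspace X. f (tau x) = (\<lambda>i. - f x i))"
    using ex .
next
  fix m assume "\<exists>f. continuous_map X (nsphere m) f \<and> (\<forall>x\<in>topspace X. f (tau x) = (\<lambda>i. - f x i))"
  then show "n \<le> m" using no by (meson not_less)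
qed

lemma no_S0:
  assumes f: "continuous_map S1S3 (nsphere 0) f" and eq: "\<forall>x\<in>topspace S1S3. f (tau x) = (\<lambda>i. - f x i)"
    and p: "p \<in> topspace S1S3" and tp: "tau p \<in> topspace S1S3"
  shows False
proof -
  define g where "g x = f x 0" for x
  have "continuous_map S1S3 euclideanreal g"
    unfolding g_def using continuous_map_compose[OF f continuous_map_nsphere_projection, of 0]
    by (simp add: o_def)
  then have gc: "continuous_on (S1 \<times> S3) g"
    by (simp add: S1S3_def)
  have conn: "connected (g ` (S1 \<times> S3))"
    by (intro connected_continuous_image gc connected_Times connected_sphere) auto
  have gv: "g x = 1 \<or> g x = -1" if "x \<in> S1 \<times> S3" for x
  proof -
    have "f x \<in> topspace (nsphere 0)" using f that unfolding continuous_map_def topspace_S1S3 by blast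
    then have "f x = e0 \<or> f x = (\<lambda>i. - e0 i)" by (simp only: ts0)
    then show ?thesis by (auto simp: g_def e0_def)
  qed
  have ps: "p \<in> S1 \<times> S3" "tau p \<in> S1 \<times> S3" using p tp by (simp_all add: topspace_S1S3)
  have gt: "g (tau p) = - g p" using eq p by (simp add: g_def)
  have mem: "g p \<in> g ` (S1 \<times> S3)" "g (tau p) \<in> g ` (S1 \<times> S3)" using ps by auto
  have iv: "x \<in> g ` (S1 \<times> S3)" if "a \<in> g ` (S1 \<times> S3)" "b \<in> g ` (S1 \<times> S3)" "a \<le> x" "x \<le> b" for a b x
    using conn that unfolding connected_iff_interval by blast
  have "0 \<in> g ` (S1 \<times> S3)"
  proof (cases "g p = 1")
    case True
    then have "g (tau p) = -1" using gt by simp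
    then show ?thesis using iv[OF mem(2) mem(1)] True by simp
  next
    case False
    then have "g p = -1" "g (tau p) = 1" using gv[OF ps(1)] gt by auto
    then show ?thesis using iv[OF mem(1) mem(2)] by simp
  qed
  then obtain x where "x \<in> S1 \<times> S3" "g x = 0" by auto
  then show False using gv by fastforce
qed

lemma cm_pt: "continuous_map (nsphere 3) S1S3 (\<lambda>x. (1, V4 x))"
  unfolding S1S3_prod by (intro continuous_map_pairedI cmV4) simp

lemma no_S2:
  assumes m: "m < 3" and f: "continuous_map S1S3 (nsphere m) f"
    and eq: "\<forall>x\<in>topspace S1S3. f (tau x) = (\<lambda>i. - f x i)"
    and tau: "\<And>v. tau (1, v) = (1, - v)"
  shows False
proof -
  define g where "g x = f (1, V4 x)" for x
  have "continuous_map (nsphere 3) (nsphere m) g"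
    unfolding g_def using continuous_map_compose[OF cm_pt f] by (simp add: o_def)
  then have g: "continuous_map (nsphere 3) (nsphere 2) g"
    by (rule cm_nsphere_up) (use m in simp)
  have "oddmap 3 g"
    unfolding oddmap_def
  proof
    fix x assume x: "x \<in> topspace (nsphere 3)"
    have "(1, V4 x) \<in> topspace S1S3" using V4_in[OF x] by (simp add: topspace_S1S3)
    then have "f (tau (1, V4 x)) = (\<lambda>i. - f (1, V4 x) i)" using eq by blast
    then show "g (\<lambda>i. - x i) = (\<lambda>i. - g x i)"
      by (simp add: g_def V4_neg tau)
  qed
  then show False using BU3[OF g] by blast
qed

lemma upper_c:
  assumes tau: "\<And>t v. snd (tau (t, v)) = - v"
  shows "\<exists>f. continuous_map S1S3 (nsphere 3) f \<and> (\<forall>x\<in>topspace S1S3. f (tau x) = (\<lambda>i. - f x i))"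
proof (intro exI conjI ballI)
  show "continuous_map S1S3 (nsphere 3) (\<lambda>z. U4 (snd z))"
  proof (rule cm_nsphere_intoI)
    fix k
    show "continuous_map S1S3 euclideanreal (\<lambda>z. U4 (snd z) k)"
      unfolding S1S3_def continuous_map_iff_continuous U4_def
      by (cases "k = 0"; cases "k = 1"; cases "k = 2"; cases "k = 3") (simp_all add: continuous_intros)
  next
    fix z assume "z \<in> topspace S1S3"
    then have "snd z \<in> S3" by (auto simp: topspace_S1S3)
    then show "U4 (snd z) \<in> topspace (nsphere 3)" by (rule U4_in)
  qed
next
  fix x assume "x \<in> topspace S1S3"
  obtain t v where x: "x = (t, v)" by (cases x)
  show "U4 (snd (tau x)) = (\<lambda>i. - U4 (snd x) i)"
    by (simp add: x tau U4_neg)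
qed

lemma upper_a:
  assumes tau: "\<And>t v. fst (tau (t, v)) = - t"
  shows "\<exists>f. continuous_map S1S3 (nsphere 1) f \<and> (\<forall>x\<in>topspace S1S3. f (tau x) = (\<lambda>i. - f x i))"
proof (intro exI conjI ballI)
  show "continuous_map S1S3 (nsphere 1) (\<lambda>z. C2 (fst z))"
  proof (rule cm_nsphere_intoI)
    fix k
    show "continuous_map S1S3 euclideanreal (\<lambda>z. C2 (fst z) k)"
      unfolding S1S3_def continuous_map_iff_continuous C2_def
      by (cases "k = 0"; cases "k = 1") (simp_all add: continuous_intros)
  next
    fix z assume "z \<in> topspace S1S3"
    then have "fst z \<in> S1" by (auto simp: topspace_S1S3)
    then show "C2 (fst z) \<in> topspace (nsphere 1)" by (rule C2_in)
  qed
next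
  fix x assume "x \<in> topspace S1S3"
  obtain t v where x: "x = (t, v)" by (cases x)
  show "C2 (fst (tau x)) = (\<lambda>i. - C2 (fst x) i)"
    by (simp add: x tau C2_neg)
qed

theorem mainTheorem9:
  fixes u :: "real^4"
  assumes "norm u = 1"
  shows "ind_Z2 S1S3 tau_a = 1 \<and> ind_Z2 S1S3 (tau_b u) = 1 \<and>
         ind_Z2 S1S3 tau_c = 3 \<and> ind_Z2 S1S3 tau_d = 3"
proof (intro conjI)
  have p: "(1, u) \<in> topspace S1S3" using assms by (simp add: topspace_S1S3)
  have uu: "inner u u = 1" using assms by (simp add: power2_norm_eq_inner[symmetric])
  show "ind_Z2 S1S3 tau_a = 1"
  proof (rule ind_eqI[OF upper_a])
    show "fst (tau_a (t, v)) = - t" for t v by (simp add: tau_a_def)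
    fix m f assume "m < (1::nat)" "continuous_map S1S3 (nsphere m) f"
      "\<forall>x\<in>topspace S1S3. f (tau_a x) = (\<lambda>i. - f x i)"
    then show False
      using no_S0[of f tau_a "(1, u)"] p assms by (simp add: tau_a_def topspace_S1S3)
  qed
  show "ind_Z2 S1S3 (tau_b u) = 1"
  proof (rule ind_eqI[OF upper_a])
    show "fst (tau_b u (t, v)) = - t" for t v by (simp add: tau_b_def)
    fix m f assume "m < (1::nat)" "continuous_map S1S3 (nsphere m) f"
      "\<forall>x\<in>topspace S1S3. f (tau_b u x) = (\<lambda>i. - f x i)"
    moreover have "tau_b u (1, u) = (-1, - u)"
    proof -
      have "refl u u = u - (2 * (u \<bullet> u)) *\<^sub>R u" by (simp add: refl_def)
      also have "\<dots> = u - 2 *\<^sub>R u" by (simp only: uu mult_1_right)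
      also have "\<dots> = - u" by (simp only: scaleR_2) simp
      finally show ?thesis by (simp add: tau_b_def)
    qed
    ultimately show False
      using no_S0[of f "tau_b u" "(1, u)"] p assms by (simp add: topspace_S1S3)
  qed
  show "ind_Z2 S1S3 tau_c = 3"
  proof (rule ind_eqI[OF upper_c])
    show "snd (tau_c (t, v)) = - v" for t v by (simp add: tau_c_def)
    fix m f assume "m < (3::nat)" "continuous_map S1S3 (nsphere m) f"
      "\<forall>x\<in>topspace S1S3. f (tau_c x) = (\<lambda>i. - f x i)"
    then show False by (rule no_S2) (simp add: tau_c_def)
  qed
  show "ind_Z2 S1S3 tau_d = 3"
  proof (rule ind_eqI[OF upper_c])
    show "snd (tau_d (t, v)) = - v" for t v by (simp add: tau_d_def)
    fix m f assume "m < (3::nat)" "continuous_map S1S3 (nsphere m) f"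
      "\<forall>x\<in>topspace S1S3. f (tau_d x) = (\<lambda>i. - f x i)"
    then show False by (rule no_S2) (simp add: tau_d_def)
  qed
qed


end
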